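(* Let $N$ be a nonnegative integer and let $f,a_1,d_1,d_2\in\mathbb{C}$ be such that every hypergeometric series below is well defined (no lower parameter is a nonpositive integer) and the denominator in the definition of $k$ below is nonzero. Put $$h=1-f+d_1+d_2-N,\qquad k=\frac{h(1+d_1+a_1-f)(1+d_2+a_1-f)}{d_1d_2-h(1+d_1+d_2+a_1-f)}.$$ Then $$ {}_{7}F_{6}\left[\begin{matrix} f-1,\ \frac{f+1}{2},\ a_1,\ d_1,\ d_2,\ 2f-2-d_1-d_2-a_1+N,\ -N\\ \frac{f-1}{2},\ f-a_1,\ f-d_1,\ f-d_2,\ 2+a_1+d_1+d_2-f-N,\ f+N\end{matrix};1\right]$$ $$=\frac{(f)_N\,(f-d_1-d_2)_N\,(f-a_1-d_1-1)_N\,(f-a_1-d_2-1)_N}{(f-d_1)_N\,(f-d_2)_N\,(f-a_1)_N\,(f-a_1-d_1-d_2-1)_N}\cdot\frac{(k+1)_N}{(k)_N}.$$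
   Context: $(x)_n$ denotes the Pochhammer symbol: $(x)_0=1$, $(x)_n=x(x+1)\cdots(x+n-1)$ for $n\ge1$. The generalized hypergeometric function is $${}_{r+1}F_{r}\left[\begin{matrix} a_1,\dots,a_{r+1}\\ b_1,\dots,b_r\end{matrix};z\right]=\sum_{n=0}^{\infty}\frac{(a_1)_n\cdots(a_{r+1})_n}{(b_1)_n\cdots(b_r)_n\,n!}z^n ,$$ where no $b_i$ is a nonpositive integer; when one upper parameter equals $-N$ with $N$ a nonnegative integer the series terminates. *)

theory Defs
  imports "HOL-Analysis.Analysis"
begin

definition hyper_term :: "complex list \<Rightarrow> complex list \<Rightarrow> complex \<Rightarrow> nat \<Rightarrow> complex" where
  "hyper_term as bs z n =
     (\<Prod>a\<leftarrow>as. pochhammer a n) / ((\<Prod>b\<leftarrow>bs. pochhammer b n) * fact n) * z ^ n"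

definition hypergeom :: "complex list \<Rightarrow> complex list \<Rightarrow> complex \<Rightarrow> complex" where
  "hypergeom as bs z = (\<Sum>n. hyper_term as bs z n)"

definition nonpos_int :: "complex \<Rightarrow> bool" where
  "nonpos_int b \<longleftrightarrow> (\<exists>m::nat. b = - of_nat m)"

end

theory Submission
  imports Defs "HOL-Computational_Algebra.Polynomial"
begin

definition hF :: "complex \<Rightarrow> complex \<Rightarrow> complex \<Rightarrow> complex \<Rightarrow> complex \<Rightarrow> complex" where
  "hF a b c d m = c + d - a - m"
definition KF :: "complex \<Rightarrow> complex \<Rightarrow> complex \<Rightarrow> complex \<Rightarrow> complex \<Rightarrow> complex" where
  "KF a b c d m = (c + d - a - m) * ((b + c - a) * (b + d - a)) + m * (c * d - (c + d - a - m) * (b + c + d - a))"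
definition EF :: "complex \<Rightarrow> complex \<Rightarrow> complex \<Rightarrow> complex \<Rightarrow> complex \<Rightarrow> complex" where
  "EF a b c d m = 2*a-b-c-d+m"
definition P1F :: "complex \<Rightarrow> complex \<Rightarrow> complex \<Rightarrow> complex \<Rightarrow> complex \<Rightarrow> complex" where
  "P1F a b c d m = (a-b-c+m)*(a-b-d+m)*KF a b c d (m+1)*hF a b c d m"
definition Q2F :: "complex \<Rightarrow> complex \<Rightarrow> complex \<Rightarrow> complex \<Rightarrow> complex \<Rightarrow> complex \<Rightarrow> complex" where
  "Q2F a b c d m n = (n-m-1)*(n+a+m) - KF a b c d m"
definition rhoF :: "complex \<Rightarrow> complex \<Rightarrow> complex \<Rightarrow> complex \<Rightarrow> complex \<Rightarrow> complex" where
  "rhoF a b c d m = 1 + (m*(1+a+m) + KF a b c d m) * b * c * d * (EF a b c d m+m+1)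
      / ((1+a+m) * P1F a b c d m)"
definition gF :: "complex \<Rightarrow> complex \<Rightarrow> complex \<Rightarrow> complex \<Rightarrow> complex \<Rightarrow> complex \<Rightarrow> complex" where
  "gF a b c d m n = (EF a b c d m+m+1)*(a-EF a b c d m)*(1+a+m+n)*n*(n+a-b)*(n+a-c)*(n+a-d)*Q2F a b c d m n
     / ((m+1)*(EF a b c d m+n)*(1+a+m)*(a+2*n)*P1F a b c d m)"

lemma key_poly:
  fixes a b c d m n :: complex
  defines "E \<equiv> EF a b c d m"
  shows "(m+1)*(1+a+m)*(a+2*n)*P1F a b c d m*(E+n)*(a-E+n)
          + (m*(1+a+m) + KF a b c d m)*b*c*d*(E+m+1)*(m+1)*(a+2*n)*(E+n)*(a-E+n)
          - (m+1-n)*E*(a-E)*(1+a+m+n)*(a+2*n)*P1F a b c d m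
       = (E+m+1)*(a-E)*(a+n)*(b+n)*(c+n)*(d+n)*(n-m-1)*Q2F a b c d m (n+1)*(E+n)
         - (E+m+1)*(a-E)*(1+a+m+n)*n*(n+a-b)*(n+a-c)*(n+a-d)*Q2F a b c d m n*(a-E+n)"
  unfolding E_def EF_def P1F_def KF_def hF_def Q2F_def by algebra

lemma absB:
  fixes x1 x2 g1 n g2 g3 g4 q y1 w3 y2 w1 p w2 :: complex
  assumes "w2 \<noteq> 0"
  shows "x1*x2*g1*n*g2*g3*g4*q/(y1*w3*y2*w1*p) = x1*x2*g1*n*g2*g3*g4*q*w2/(y1*y2*w1*p*w3*w2)"
  using assms by (simp add: field_simps)

lemma absC:
  fixes A y1 y2 w1 p w3 w2 :: complex
  assumes "y1 \<noteq> 0" "y2 \<noteq> 0" "w1 \<noteq> 0" "p \<noteq> 0" "w3 \<noteq> 0" "w2 \<noteq> 0"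
  shows "1 + A/(y2*p) = (y1*y2*w1*p*w3*w2 + A*y1*w1*w3*w2)/(y1*y2*w1*p*w3*w2)"
  using assms by (simp add: field_simps)

lemma absD:
  fixes k E x2 g1 y1 w3 w2 y2 w1 p :: complex
  assumes "w1 \<noteq> 0" "p \<noteq> 0"
  shows "k*E*x2*g1/(y1*w3*w2*y2) = k*E*x2*g1*w1*p/(y1*y2*w1*p*w3*w2)"
  using assms by (simp add: field_simps)

lemma absA:
  fixes x1 x2 u1 u2 u3 u4 u5 q y1 u6 y2 u7 p z1 z2 z3 z4 z5 w1 w2 w3
        u1' u2' u3' u4' u5' u6' u7' w1' w2' :: complex
  assumes "u1 \<noteq> 0" "u2 \<noteq> 0" "u3 \<noteq> 0" "u4 \<noteq> 0" "u5 \<noteq> 0" "u6 \<noteq> 0" "u7 \<noteq> 0" "w3 \<noteq> 0"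
    "w1 \<noteq> 0"
    "u1 = u1'" "u2 = u2'" "u3 = u3'" "u4 = u4'" "u5 = u5'" "u6 = u6'" "u7 = 2*u7'" "w1 = 2*w1'" "w2 = w2'"
  shows "x1*x2*u1*u2*u3*u4*u5*q/(y1*u6*y2*u7*p) * (z1*u7'*z2*z3*z4*u6'*z5/(w1'*u3'*u4'*u5'*w2'*u1'*u2'))
     = x1*x2*z1*z2*z3*z4*z5*q*w3/(y1*y2*w1*p*w3*w2)"
proof -
  have "u7' \<noteq> 0" "w1' \<noteq> 0" using assms by auto
  then show ?thesis using assms by (simp add: field_simps)
qed

lemma rat_id:
  fixes a b c d m n m1 n1 :: complex
  defines "E \<equiv> EF a b c d m"
  assumes m1: "m1 = m + 1" and n1: "n1 = n + 1"
  assumes nz: "m+1 \<noteq> 0" "1+a+m \<noteq> 0" "a+2*n \<noteq> 0" "E+n \<noteq> 0" "a-E+n \<noteq> 0"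
     "P1F a b c d m \<noteq> 0" "E+(n+1) \<noteq> 0" "a+2*(n+1) \<noteq> 0"
     "(n+1)+a-b \<noteq> 0" "(n+1)+a-c \<noteq> 0" "(n+1)+a-d \<noteq> 0"
     "1+a+m+(n+1) \<noteq> 0" "n+1 \<noteq> 0"
  shows "rhoF a b c d m - (m+1-n)*E*(a-E)*(1+a+m+n)/((m+1)*(E+n)*(a-E+n)*(1+a+m))
     = gF a b c d m n1 * ((a+n)*(1+a/2+n)*(b+n)*(c+n)*(d+n)*(EF a b c d m1+n)*(-m1+n)
          / ((a/2+n)*(1+a-b+n)*(1+a-c+n)*(1+a-d+n)*(1+a-EF a b c d m1+n)*(1+a+m1+n)*n1))
       - gF a b c d m n"
proof -
  define Y where "Y = (m+1)*(1+a+m)*(a+2*n)*P1F a b c d m*(E+n)*(a-E+n)"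
  have Ynz: "Y \<noteq> 0" using nz unfolding Y_def by simp
  have A: "gF a b c d m n1 * ((a+n)*(1+a/2+n)*(b+n)*(c+n)*(d+n)*(EF a b c d m1+n)*(-m1+n)
          / ((a/2+n)*(1+a-b+n)*(1+a-c+n)*(1+a-d+n)*(1+a-EF a b c d m1+n)*(1+a+m1+n)*n1))
     = (E+m+1)*(a-E)*(a+n)*(b+n)*(c+n)*(d+n)*(-m1+n)*Q2F a b c d m n1*(E+n) / Y"
    unfolding gF_def Y_def E_def[symmetric]
    apply (rule absA)
    using nz by (auto simp: m1 n1 E_def EF_def algebra_simps)
  have B: "gF a b c d m n = (E+m+1)*(a-E)*(1+a+m+n)*n*(n+a-b)*(n+a-c)*(n+a-d)*Q2F a b c d m n*(a-E+n) / Y"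
    unfolding gF_def Y_def E_def[symmetric]
    by (rule absB) (use nz in auto)
  have C: "rhoF a b c d m = ((m+1)*(1+a+m)*(a+2*n)*P1F a b c d m*(E+n)*(a-E+n)
          + (m*(1+a+m) + KF a b c d m)*b*c*d*(E+m+1)*(m+1)*(a+2*n)*(E+n)*(a-E+n)) / Y"
    unfolding rhoF_def Y_def E_def[symmetric]
    by (rule absC) (use nz in auto)
  have D: "(m+1-n)*E*(a-E)*(1+a+m+n)/((m+1)*(E+n)*(a-E+n)*(1+a+m))
      = (m+1-n)*E*(a-E)*(1+a+m+n)*(a+2*n)*P1F a b c d m / Y"
    unfolding Y_def by (rule absD) (use nz in auto)
  have K: "(m+1)*(1+a+m)*(a+2*n)*P1F a b c d m*(E+n)*(a-E+n)
          + (m*(1+a+m) + KF a b c d m)*b*c*d*(E+m+1)*(m+1)*(a+2*n)*(E+n)*(a-E+n)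
          - (m+1-n)*E*(a-E)*(1+a+m+n)*(a+2*n)*P1F a b c d m
       = (E+m+1)*(a-E)*(a+n)*(b+n)*(c+n)*(d+n)*(-m1+n)*Q2F a b c d m n1*(E+n)
         - (E+m+1)*(a-E)*(1+a+m+n)*n*(n+a-b)*(n+a-c)*(n+a-d)*Q2F a b c d m n*(a-E+n)"
  proof -
    have eq1: "-m1+n = n-m-1" using m1 by simp
    show ?thesis unfolding eq1 n1
      by (rule key_poly[where a=a and b=b and c=c and d=d and m=m and n=n, folded E_def])
  qed
  show ?thesis unfolding A B C D using K
    by (simp add: diff_divide_distrib[symmetric] add_divide_distrib[symmetric])
qed


definition tt :: "complex \<Rightarrow> complex \<Rightarrow> complex \<Rightarrow> complex \<Rightarrow> nat \<Rightarrow> nat \<Rightarrow> complex" where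
  "tt a b c d M n = pochhammer a n * pochhammer (1+a/2) n * pochhammer b n * pochhammer c n
     * pochhammer d n * pochhammer (EF a b c d (of_nat M)) n * pochhammer (- of_nat M) n
     / (pochhammer (a/2) n * pochhammer (1+a-b) n * pochhammer (1+a-c) n * pochhammer (1+a-d) n
        * pochhammer (1+a-EF a b c d (of_nat M)) n * pochhammer (1+a+ of_nat M) n * fact n)"

lemma absR2:
  fixes p1 p2 p3 p4 p5 p6 p7 x1 x2 x3 x4 x5 x6 x7 q1 q2 q3 q4 q5 q6 y1 y2 y3 y4 y5 y6 y7 F :: complex
  shows "(p1*x1)*(p2*x2)*(p3*x3)*(p4*x4)*(p5*x5)*(p6*x6)*(p7*x7)
      / ((q1*y1)*(q2*y2)*(q3*y3)*(q4*y4)*(q5*y5)*(q6*y6)*(y7*F))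
    = p1*p2*p3*p4*p5*p6*p7/(q1*q2*q3*q4*q5*q6*F) * (x1*x2*x3*x4*x5*x6*x7/(y1*y2*y3*y4*y5*y6*y7))"
proof -
  have 1: "(p1*x1)*(p2*x2)*(p3*x3)*(p4*x4)*(p5*x5)*(p6*x6)*(p7*x7)
      = (p1*p2*p3*p4*p5*p6*p7) * (x1*x2*x3*x4*x5*x6*x7)" by (simp only: mult_ac)
  have 2: "(q1*y1)*(q2*y2)*(q3*y3)*(q4*y4)*(q5*y5)*(q6*y6)*(y7*F)
      = (q1*q2*q3*q4*q5*q6*F) * (y1*y2*y3*y4*y5*y6*y7)" by (simp only: mult_ac)
  show ?thesis unfolding 1 2 by (rule times_divide_times_eq[symmetric])
qed

lemma tt_Suc_n:
  "tt a b c d M (Suc n) = tt a b c d M n *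
     ((a + of_nat n) * (1+a/2 + of_nat n) * (b + of_nat n) * (c + of_nat n) * (d + of_nat n)
      * (EF a b c d (of_nat M) + of_nat n) * (- of_nat M + of_nat n)
      / ((a/2 + of_nat n) * (1+a-b + of_nat n) * (1+a-c + of_nat n) * (1+a-d + of_nat n)
         * (1+a-EF a b c d (of_nat M) + of_nat n) * (1+a+ of_nat M + of_nat n) * of_nat (Suc n)))"
  unfolding tt_def pochhammer_Suc fact_Suc of_nat_mult
  by (rule absR2)

lemma poch_shift: "(x::complex) * pochhammer (x+1) n = pochhammer x n * (x + of_nat n)"
  by (metis pochhammer_Suc pochhammer_rec)

lemma absR1:
  fixes U L F pE pE' pM pM' pA pA' pB pB' E A B0 s1 s2 s3 k j k1 jx :: complex
  assumes h: "E*pE' = pE* s1" "jx*pM = pM'*j" "A*pA = pA'* s2" "B0*pB' = pB* s3"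
    and k1: "k1 = -j" and jx: "jx = -k"
    and nz: "E \<noteq> 0" "A \<noteq> 0" "B0 \<noteq> 0" "s1 \<noteq> 0" "s2 \<noteq> 0" "s3 \<noteq> 0" "k \<noteq> 0" "j \<noteq> 0"
       "L \<noteq> 0" "pA' \<noteq> 0" "pB \<noteq> 0" "F \<noteq> 0"
  shows "U*pE*pM/(L*pA*pB*F) = U*pE'*pM'/(L*pA'*pB'*F) * (k1*E*A* s3/(k* s1* s2*B0))"
proof -
  have e1: "pE' = pE* s1/E" using h(1) nz by (simp add: field_simps)
  have jxnz: "jx \<noteq> 0" using jx nz by simp
  have e2: "pM = pM'*j/jx" using h(2) jxnz by (simp add: eq_divide_eq mult.commute)
  have e3: "pA = pA'* s2/A" using h(3) nz by (simp add: field_simps)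
  have e4: "pB' = pB* s3/B0" using h(4) nz by (simp add: field_simps)
  show ?thesis unfolding e1 e2 e3 e4 k1 jx using nz by (simp add: field_simps)
qed

lemma tt_Suc_M:
  fixes a b c d :: complex and M n :: nat
  defines "m \<equiv> (of_nat M :: complex)" and "nn \<equiv> (of_nat n :: complex)" and "E \<equiv> EF a b c d (of_nat M)"
  assumes n: "n \<le> M"
    and nz: "E \<noteq> 0" "a-E \<noteq> 0" "1+a+m \<noteq> 0" "E+nn \<noteq> 0" "a-E+nn \<noteq> 0" "1+a+m+nn \<noteq> 0"
      "pochhammer (a/2) n * pochhammer (1+a-b) n * pochhammer (1+a-c) n * pochhammer (1+a-d) n \<noteq> 0"
      "pochhammer (1+a-EF a b c d (of_nat (Suc M))) n \<noteq> 0" "pochhammer (1+a+m) n \<noteq> 0"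
  shows "tt a b c d M n = tt a b c d (Suc M) n * ((m+1-nn)*E*(a-E)*(1+a+m+nn)/((m+1)*(E+nn)*(a-E+nn)*(1+a+m)))"
  unfolding tt_def E_def[symmetric] m_def[symmetric]
  apply (rule absR1[where j="-(m+1)+nn" and jx="-(m+1)"])
  subgoal using poch_shift[of E n] by (simp add: E_def EF_def m_def nn_def algebra_simps)
  subgoal using poch_shift[of "-(m+1)" n] by (simp add: m_def nn_def algebra_simps)
  subgoal using poch_shift[of "a-E" n] by (simp add: E_def EF_def m_def nn_def algebra_simps)
  subgoal using poch_shift[of "1+a+m" n] by (simp add: m_def nn_def algebra_simps)
  subgoal by simp
  subgoal by simp
  subgoal using nz by simp
  subgoal using nz by simp
  subgoal using nz by simp
  subgoal using nz by simp
  subgoal using nz by simp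
  subgoal using nz by simp
  subgoal unfolding m_def by (metis of_nat_Suc of_nat_eq_0_iff nat.distinct(1) add.commute)
  subgoal proof -
    have "(of_nat n::complex) \<noteq> of_nat (Suc M)" using n by (simp only: of_nat_eq_iff)
    then show ?thesis unfolding m_def nn_def by (auto simp: algebra_simps)
  qed
  subgoal using nz by simp
  subgoal using nz by simp
  subgoal using nz by simp
  subgoal by simp
  done
definition Gen :: "complex \<Rightarrow> complex \<Rightarrow> complex \<Rightarrow> complex \<Rightarrow> nat \<Rightarrow> bool" where
  "Gen a b c d N \<longleftrightarrow> a \<notin> \<int> \<and> b \<notin> \<int> \<and> c \<notin> \<int> \<and> d \<notin> \<int> \<and> a-b \<notin> \<int> \<and> a-c \<notin> \<int> \<and> a-d \<notin> \<int>
     \<and> a-b-c \<notin> \<int> \<and> a-b-d \<notin> \<int> \<and> a-c-d \<notin> \<int> \<and> a-b-c-d \<notin> \<int> \<and> 2*a-b-c-d \<notin> \<int>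
     \<and> (\<forall>M\<le>N. KF a b c d (of_nat M) \<noteq> 0)"

lemma nZ1: "(x::complex) \<notin> \<int> \<Longrightarrow> y - x \<in> \<int> \<Longrightarrow> y \<noteq> 0"
proof
  assume x: "x \<notin> \<int>" and yx: "y - x \<in> \<int>" and y: "y = 0"
  have "- (y - x) \<in> \<int>" using yx by (intro Ints_minus)
  then show False using x y by simp
qed
lemma nZ2: "(x::complex) \<notin> \<int> \<Longrightarrow> y + x \<in> \<int> \<Longrightarrow> y \<noteq> 0"
  by auto
lemma nZ3: "(x::complex) \<notin> \<int> \<Longrightarrow> y - x \<in> \<int> \<Longrightarrow> y \<notin> \<int>"
proof
  assume x: "x \<notin> \<int>" and yx: "y - x \<in> \<int>" and y: "y \<in> \<int>"
  have "x \<in> \<int>" using Ints_diff[OF y yx] by simp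
  then show False using x by simp
qed
lemma poch_nz: "(x::complex) \<notin> \<int> \<Longrightarrow> pochhammer x n \<noteq> 0"
  by (auto simp: pochhammer_eq_0_iff)
lemma poch_nz': "(x::complex) \<notin> \<int> \<Longrightarrow> y - x \<in> \<int> \<Longrightarrow> pochhammer y n \<noteq> 0"
  using nZ3 poch_nz by blast

lemma poch_nz'': "(x::complex) \<notin> \<int> \<Longrightarrow> y + x \<in> \<int> \<Longrightarrow> pochhammer y n \<noteq> 0"
proof (rule poch_nz)
  assume x: "x \<notin> \<int>" and yx: "y + x \<in> \<int>"
  show "y \<notin> \<int>"
  proof
    assume "y \<in> \<int>"
    then have "(y + x) - y \<in> \<int>" using yx by (intro Ints_diff)
    then show False using x by simp
  qed
qed

lemma Gen_mono: "Gen a b c d N \<Longrightarrow> M \<le> N \<Longrightarrow> Gen a b c d M"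
  unfolding Gen_def by auto

lemma absWZ:
  fixes r c g1 rr g0 X :: complex
  assumes h: "r - c = g1 * rr - g0"
  shows "r * X - X * c = g1 * (X * rr) - g0 * X"
proof -
  have "r * X - X * c = (r - c) * X" by (simp add: algebra_simps)
  also have "\<dots> = (g1 * rr - g0) * X" using h by simp
  also have "\<dots> = g1 * (X * rr) - g0 * X" by (simp add: algebra_simps)
  finally show ?thesis .
qed

lemma tt_zero: "M < n \<Longrightarrow> tt a b c d M n = 0"
  unfolding tt_def by (auto simp: pochhammer_eq_0_iff)

lemma wz_step:
  fixes a b c d :: complex and M n :: nat
  defines "m \<equiv> (of_nat M :: complex)"
  assumes G: "Gen a b c d (Suc M)" and n: "n \<le> Suc M"
  shows "rhoF a b c d m * tt a b c d (Suc M) n - tt a b c d M n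
     = gF a b c d m (of_nat (Suc n)) * tt a b c d (Suc M) (Suc n) - gF a b c d m (of_nat n) * tt a b c d (Suc M) n"
proof -
  define nn where "nn = (of_nat n :: complex)"
  define E where "E = EF a b c d m"
  have ga: "a \<notin> \<int>" and gb: "b \<notin> \<int>" and gc: "c \<notin> \<int>" and gd: "d \<notin> \<int>" and gab: "a-b \<notin> \<int>"
    and gac: "a-c \<notin> \<int>" and gad: "a-d \<notin> \<int>" and gabc: "a-b-c \<notin> \<int>" and gabd: "a-b-d \<notin> \<int>"
    and gacd: "a-c-d \<notin> \<int>" and gabcd: "a-b-c-d \<notin> \<int>" and ge: "2*a-b-c-d \<notin> \<int>"
    and gK: "\<And>k. k \<le> Suc M \<Longrightarrow> KF a b c d (of_nat k) \<noteq> 0"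
    using G unfolding Gen_def by auto
  define c1 where "c1 = (m+1-nn)*E*(a-E)*(1+a+m+nn)/((m+1)*(E+nn)*(a-E+nn)*(1+a+m))"
  define r2 where "r2 = (a + nn) * (1+a/2 + nn) * (b + nn) * (c + nn) * (d + nn)
      * (EF a b c d (of_nat (Suc M)) + nn) * (- of_nat (Suc M) + nn)
      / ((a/2 + nn) * (1+a-b + nn) * (1+a-c + nn) * (1+a-d + nn)
         * (1+a-EF a b c d (of_nat (Suc M)) + nn) * (1+a+ of_nat (Suc M) + nn) * of_nat (Suc n))"
  have h1: "tt a b c d M n = tt a b c d (Suc M) n * c1"
  proof (cases "n \<le> M")
    case True
    show ?thesis unfolding c1_def E_def m_def nn_def
    proof (rule tt_Suc_M[OF True])
      show "EF a b c d (of_nat M) \<noteq> 0" by (rule nZ1[OF ge]) (simp add: EF_def)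
      show "a - EF a b c d (of_nat M) \<noteq> 0" by (rule nZ2[OF gabcd]) (simp add: EF_def algebra_simps)
      show "1 + a + of_nat M \<noteq> 0" by (rule nZ1[OF ga]) (simp add: algebra_simps)
      show "EF a b c d (of_nat M) + of_nat n \<noteq> 0" by (rule nZ1[OF ge]) (simp add: EF_def algebra_simps)
      show "a - EF a b c d (of_nat M) + of_nat n \<noteq> 0" by (rule nZ2[OF gabcd]) (simp add: EF_def algebra_simps)
      show "1 + a + of_nat M + of_nat n \<noteq> 0" by (rule nZ1[OF ga]) (simp add: algebra_simps)
      have "a/2 \<notin> \<int>"
      proof
        assume "a/2 \<in> \<int>"
        then have "2*(a/2) \<in> \<int>" by (intro Ints_mult) auto
        then show False using ga by simp
      qed
      then show "pochhammer (a/2) n * pochhammer (1+a-b) n * pochhammer (1+a-c) n * pochhammer (1+a-d) n \<noteq> 0"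
        using poch_nz[of "a/2" n] poch_nz'[OF gab, of "1+a-b" n] poch_nz'[OF gac, of "1+a-c" n] poch_nz'[OF gad, of "1+a-d" n]
        by (simp add: algebra_simps)
      show "pochhammer (1 + a - EF a b c d (of_nat (Suc M))) n \<noteq> 0"
        by (rule poch_nz''[OF gabcd]) (simp add: EF_def algebra_simps)
      show "pochhammer (1 + a + of_nat M) n \<noteq> 0"
        by (rule poch_nz'[OF ga]) (simp add: algebra_simps)
    qed
  next
    case False
    then have "n = Suc M" using n by simp
    then show ?thesis unfolding c1_def nn_def m_def by (simp add: tt_zero)
  qed
  have h2: "tt a b c d (Suc M) (Suc n) = tt a b c d (Suc M) n * r2"
    unfolding r2_def nn_def by (rule tt_Suc_n)
  have rid: "rhoF a b c d m - c1 = gF a b c d m (of_nat (Suc n)) * r2 - gF a b c d m nn"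
    unfolding c1_def r2_def E_def
  proof (rule rat_id)
    show "of_nat (Suc M) = m + 1" unfolding m_def by simp
    show "of_nat (Suc n) = nn + 1" unfolding nn_def by simp
    show "m + 1 \<noteq> 0" unfolding m_def by (metis of_nat_Suc of_nat_eq_0_iff nat.distinct(1) add.commute)
    show "1 + a + m \<noteq> 0" by (rule nZ1[OF ga]) (simp add: m_def algebra_simps)
    show "a + 2*nn \<noteq> 0" by (rule nZ1[OF ga]) (simp add: nn_def algebra_simps)
    show "EF a b c d m + nn \<noteq> 0" by (rule nZ1[OF ge]) (simp add: EF_def m_def nn_def algebra_simps)
    show "a - EF a b c d m + nn \<noteq> 0" by (rule nZ2[OF gabcd]) (simp add: EF_def m_def nn_def algebra_simps)
    show "P1F a b c d m \<noteq> 0"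
    proof -
      have "a-b-c+m \<noteq> 0" by (rule nZ1[OF gabc]) (simp add: m_def algebra_simps)
      moreover have "a-b-d+m \<noteq> 0" by (rule nZ1[OF gabd]) (simp add: m_def algebra_simps)
      moreover have "KF a b c d (m+1) \<noteq> 0" using gK[of "Suc M"] by (simp add: m_def add.commute)
      moreover have "hF a b c d m \<noteq> 0" unfolding hF_def by (rule nZ2[OF gacd]) (simp add: m_def algebra_simps)
      ultimately show ?thesis unfolding P1F_def by simp
    qed
    show "EF a b c d m + (nn+1) \<noteq> 0" by (rule nZ1[OF ge]) (simp add: EF_def m_def nn_def algebra_simps)
    show "a + 2*(nn+1) \<noteq> 0" by (rule nZ1[OF ga]) (simp add: nn_def algebra_simps)
    show "(nn+1)+a-b \<noteq> 0" by (rule nZ1[OF gab]) (simp add: nn_def algebra_simps)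
    show "(nn+1)+a-c \<noteq> 0" by (rule nZ1[OF gac]) (simp add: nn_def algebra_simps)
    show "(nn+1)+a-d \<noteq> 0" by (rule nZ1[OF gad]) (simp add: nn_def algebra_simps)
    show "1+a+m+(nn+1) \<noteq> 0" by (rule nZ1[OF ga]) (simp add: m_def nn_def algebra_simps)
    show "nn+1 \<noteq> 0" unfolding nn_def by (metis of_nat_Suc of_nat_eq_0_iff nat.distinct(1) add.commute)
  qed
  show ?thesis unfolding h1 h2 by (rule absWZ[OF rid[unfolded nn_def]])
qed


definition PiF :: "complex \<Rightarrow> complex \<Rightarrow> complex \<Rightarrow> complex \<Rightarrow> nat \<Rightarrow> complex" where
  "PiF a b c d N = pochhammer (1+a) N * pochhammer (1+a-c-d) N * pochhammer (a-b-c) N * pochhammer (a-b-d) N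
     / (pochhammer (1+a-c) N * pochhammer (1+a-d) N * pochhammer (1+a-b) N * pochhammer (a-b-c-d) N)"

definition RHSF :: "complex \<Rightarrow> complex \<Rightarrow> complex \<Rightarrow> complex \<Rightarrow> nat \<Rightarrow> complex" where
  "RHSF a b c d N = PiF a b c d N * KF a b c d (of_nat N) / (hF a b c d (of_nat N) * ((b+c-a)*(b+d-a)))"

lemma absPi:
  fixes p1 p2 p3 p4 x1 x2 x3 x4 q1 q2 q3 q4 y1 y2 y3 y4 :: complex
  shows "(p1*x1)*(p2*x2)*(p3*x3)*(p4*x4) / ((q1*y1)*(q2*y2)*(q3*y3)*(q4*y4))
    = p1*p2*p3*p4/(q1*q2*q3*q4) * (x1*x2*x3*x4/(y1*y2*y3*y4))"
proof -
  have 1: "(p1*x1)*(p2*x2)*(p3*x3)*(p4*x4) = (p1*p2*p3*p4)*(x1*x2*x3*x4)" by (simp only: mult_ac)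
  have 2: "(q1*y1)*(q2*y2)*(q3*y3)*(q4*y4) = (q1*q2*q3*q4)*(y1*y2*y3*y4)" by (simp only: mult_ac)
  show ?thesis unfolding 1 2 by (rule times_divide_times_eq[symmetric])
qed

lemma PiF_Suc:
  "PiF a b c d (Suc M) = PiF a b c d M *
     ((1+a + of_nat M)*(1+a-c-d + of_nat M)*(a-b-c + of_nat M)*(a-b-d + of_nat M)
      / ((1+a-c + of_nat M)*(1+a-d + of_nat M)*(1+a-b + of_nat M)*(a-b-c-d + of_nat M)))"
  unfolding PiF_def pochhammer_Suc by (rule absPi)

lemma rho_poly:
  fixes a b c d m :: complex
  shows "(1+a-c+m)*(1+a-d+m)*(1+a-b+m)*(a-b-c-d+m)*KF a b c d m*hF a b c d (m+1)
     = (1+a+m)*(1+a-c-d+m)*P1F a b c d m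
       + (m*(1+a+m) + KF a b c d m) * b * c * d * (EF a b c d m+m+1) * (1+a-c-d+m)"
  unfolding KF_def hF_def P1F_def EF_def by algebra

lemma absRho:
  fixes y w p X rn :: complex
  assumes "y \<noteq> 0" "w \<noteq> 0" "p \<noteq> 0" "rn = y*w*p + X*w"
  shows "1 + X/(y*p) = rn/(y*w*p)"
  using assms by (simp add: field_simps)

lemma rho_eq:
  fixes a b c d m :: complex
  assumes "1+a+m \<noteq> 0" "1+a-c-d+m \<noteq> 0" "P1F a b c d m \<noteq> 0"
  shows "rhoF a b c d m = (1+a-c+m)*(1+a-d+m)*(1+a-b+m)*(a-b-c-d+m)*KF a b c d m*hF a b c d (m+1)
     / ((1+a+m)*(1+a-c-d+m)*P1F a b c d m)"
  unfolding rhoF_def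
  by (rule absRho) (use assms rho_poly[where a=a and b=b and c=c and d=d and m=m] in auto)


lemma absRHS:
  fixes d1 d2 d3 d4 K0 h1 n1 n2 n3 n4 K1 h0 P B :: complex
  assumes "d1 \<noteq> 0" "d2 \<noteq> 0" "d3 \<noteq> 0" "d4 \<noteq> 0" "n1 \<noteq> 0" "n2 \<noteq> 0" "n3 \<noteq> 0" "n4 \<noteq> 0"
    "K1 \<noteq> 0" "h1 \<noteq> 0" "h0 \<noteq> 0" "B \<noteq> 0"
  shows "P * K0 / (h0 * B) = d1*d2*d3*d4*K0*h1 / (n1*n2*(n3*n4*K1*h0))
      * (P * (n1*n2*n3*n4/(d1*d2*d3*d4)) * K1 / (h1 * B))"
  using assms by (simp add: field_simps)

lemma rhs_step:
  fixes a b c d :: complex and M :: nat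
  defines "m \<equiv> (of_nat M :: complex)"
  assumes G: "Gen a b c d (Suc M)"
  shows "RHSF a b c d M = rhoF a b c d m * RHSF a b c d (Suc M)"
proof -
  have ga: "a \<notin> \<int>" and gb: "b \<notin> \<int>" and gc: "c \<notin> \<int>" and gd: "d \<notin> \<int>" and gab: "a-b \<notin> \<int>"
    and gac: "a-c \<notin> \<int>" and gad: "a-d \<notin> \<int>" and gabc: "a-b-c \<notin> \<int>" and gabd: "a-b-d \<notin> \<int>"
    and gacd: "a-c-d \<notin> \<int>" and gabcd: "a-b-c-d \<notin> \<int>" and ge: "2*a-b-c-d \<notin> \<int>"
    and gK: "\<And>k. k \<le> Suc M \<Longrightarrow> KF a b c d (of_nat k) \<noteq> 0"
    using G unfolding Gen_def by auto
  have sm: "(of_nat (Suc M) :: complex) = m + 1" unfolding m_def by simp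
  have K1: "KF a b c d (m+1) \<noteq> 0" using gK[of "Suc M", unfolded sm] by simp
  have K0: "KF a b c d m \<noteq> 0" using gK[of M] unfolding m_def by simp
  have h0: "hF a b c d m \<noteq> 0" unfolding hF_def by (rule nZ2[OF gacd]) (simp add: m_def algebra_simps)
  have h1: "hF a b c d (m+1) \<noteq> 0" unfolding hF_def by (rule nZ2[OF gacd]) (simp add: m_def algebra_simps)
  have B: "(b+c-a)*(b+d-a) \<noteq> 0"
  proof -
    have "b+c-a \<noteq> 0" by (rule nZ2[OF gabc]) simp
    moreover have "b+d-a \<noteq> 0" by (rule nZ2[OF gabd]) simp
    ultimately show ?thesis by simp
  qed
  have n1: "1+a+m \<noteq> 0" by (rule nZ1[OF ga]) (simp add: m_def algebra_simps)
  have n2: "1+a-c-d+m \<noteq> 0" by (rule nZ1[OF gacd]) (simp add: m_def algebra_simps)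
  have n3: "a-b-c+m \<noteq> 0" by (rule nZ1[OF gabc]) (simp add: m_def algebra_simps)
  have n4: "a-b-d+m \<noteq> 0" by (rule nZ1[OF gabd]) (simp add: m_def algebra_simps)
  have d1: "1+a-c+m \<noteq> 0" by (rule nZ1[OF gac]) (simp add: m_def algebra_simps)
  have d2: "1+a-d+m \<noteq> 0" by (rule nZ1[OF gad]) (simp add: m_def algebra_simps)
  have d3: "1+a-b+m \<noteq> 0" by (rule nZ1[OF gab]) (simp add: m_def algebra_simps)
  have d4: "a-b-c-d+m \<noteq> 0" by (rule nZ1[OF gabcd]) (simp add: m_def algebra_simps)
  have P1: "P1F a b c d m \<noteq> 0" unfolding P1F_def using n3 n4 K1 h0 by simp
  have rho: "rhoF a b c d m = (1+a-c+m)*(1+a-d+m)*(1+a-b+m)*(a-b-c-d+m)*KF a b c d m*hF a b c d (m+1)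
     / ((1+a+m)*(1+a-c-d+m)*((a-b-c+m)*(a-b-d+m)*KF a b c d (m+1)*hF a b c d m))"
    using rho_eq[OF n1 n2 P1] unfolding P1F_def .
  show ?thesis unfolding rho RHSF_def PiF_Suc sm m_def[symmetric]
    by (rule absRHS) (use d1 d2 d3 d4 n1 n2 n3 n4 K1 h1 h0 B in auto)
qed

lemma rho_nz:
  fixes a b c d :: complex and M :: nat
  assumes G: "Gen a b c d (Suc M)"
  shows "rhoF a b c d (of_nat M) \<noteq> 0"
proof -
  have "RHSF a b c d M \<noteq> 0"
  proof -
    have ga: "a \<notin> \<int>" and gab: "a-b \<notin> \<int>"
      and gac: "a-c \<notin> \<int>" and gad: "a-d \<notin> \<int>" and gabc: "a-b-c \<notin> \<int>" and gabd: "a-b-d \<notin> \<int>"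
      and gacd: "a-c-d \<notin> \<int>" and gabcd: "a-b-c-d \<notin> \<int>"
      and gK: "KF a b c d (of_nat M) \<noteq> 0"
      using G unfolding Gen_def by auto
    have "PiF a b c d M \<noteq> 0" unfolding PiF_def
      using poch_nz'[OF ga, of "1+a" M] poch_nz'[OF gacd, of "1+a-c-d" M] poch_nz[OF gabc, of M]
        poch_nz[OF gabd, of M] poch_nz'[OF gac, of "1+a-c" M] poch_nz'[OF gad, of "1+a-d" M]
        poch_nz'[OF gab, of "1+a-b" M] poch_nz[OF gabcd, of M]
      by (simp add: algebra_simps)
    moreover have "hF a b c d (of_nat M) \<noteq> 0" unfolding hF_def by (rule nZ2[OF gacd]) (simp add: algebra_simps)
    moreover have "b+c-a \<noteq> 0" by (rule nZ2[OF gabc]) simp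
    moreover have "b+d-a \<noteq> 0" by (rule nZ2[OF gabd]) simp
    ultimately show ?thesis unfolding RHSF_def using gK by simp
  qed
  then show ?thesis using rhs_step[OF G] by auto
qed

lemma main_gen:
  "Gen a b c d N \<Longrightarrow> (\<Sum>n\<le>N. tt a b c d N n) = RHSF a b c d N"
proof (induction N)
  case 0
  then have gacd: "a-c-d \<notin> \<int>" and gabc: "a-b-c \<notin> \<int>" and gabd: "a-b-d \<notin> \<int>" unfolding Gen_def by auto
  have "c+d-a \<noteq> 0" by (rule nZ2[OF gacd]) simp
  moreover have "b+c-a \<noteq> 0" by (rule nZ2[OF gabc]) simp
  moreover have "b+d-a \<noteq> 0" by (rule nZ2[OF gabd]) simp
  ultimately show ?case unfolding RHSF_def PiF_def KF_def hF_def tt_def by simp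
next
  case (Suc M)
  define m where "m = (of_nat M :: complex)"
  define GG where "GG k = gF a b c d m (of_nat k) * tt a b c d (Suc M) k" for k
  have IH: "(\<Sum>n\<le>M. tt a b c d M n) = RHSF a b c d M"
    using Suc.IH Gen_mono[OF Suc.prems, of M] by simp
  have tele: "(\<Sum>n<Suc (Suc M). rhoF a b c d m * tt a b c d (Suc M) n - tt a b c d M n)
      = (\<Sum>n<Suc (Suc M). GG (Suc n) - GG n)"
    apply (rule sum.cong[OF refl])
    subgoal for n unfolding GG_def m_def by (rule wz_step[OF Suc.prems]) simp
    done
  also have "\<dots> = GG (Suc (Suc M)) - GG 0" by (rule sum_lessThan_telescope)
  also have "\<dots> = 0" unfolding GG_def by (simp add: tt_zero gF_def)
  finally have z: "(\<Sum>n<Suc (Suc M). rhoF a b c d m * tt a b c d (Suc M) n - tt a b c d M n) = 0" .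
  have s0: "(\<Sum>n<Suc (Suc M). tt a b c d M n) = RHSF a b c d M"
    using IH by (simp add: lessThan_Suc_atMost[symmetric] tt_zero)
  have "rhoF a b c d m * (\<Sum>n\<le>Suc M. tt a b c d (Suc M) n) = RHSF a b c d M"
  proof -
    have z2: "(\<Sum>n<Suc (Suc M). rhoF a b c d m * tt a b c d (Suc M) n) = (\<Sum>n<Suc (Suc M). tt a b c d M n)"
      using z unfolding sum_subtractf by simp
    show ?thesis unfolding sum_distrib_left lessThan_Suc_atMost[symmetric] using z2 s0 by simp
  qed
  also have "\<dots> = rhoF a b c d m * RHSF a b c d (Suc M)"
    unfolding m_def by (rule rhs_step[OF Suc.prems])
  finally show ?case using rho_nz[OF Suc.prems] unfolding m_def by simp
qed


lemma hyper_tt: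
  fixes f a1 d1 d2 :: complex and N n :: nat
  shows "hyper_term
           [f - 1, (f + 1) / 2, a1, d1, d2, 2 * f - 2 - d1 - d2 - a1 + of_nat N, - of_nat N]
           [(f - 1) / 2, f - a1, f - d1, f - d2, 2 + a1 + d1 + d2 - f - of_nat N, f + of_nat N] 1 n
       = tt (f-1) a1 d1 d2 N n"
proof -
  have e1: "1 + (f-1)/2 = (f+1)/2" by (simp add: field_simps)
  have e2: "EF (f-1) a1 d1 d2 (of_nat N) = 2 * f - 2 - d1 - d2 - a1 + of_nat N"
    unfolding EF_def by (simp add: algebra_simps)
  have e3: "1 + (f-1) - a1 = f - a1" "1 + (f-1) - d1 = f - d1" "1 + (f-1) - d2 = f - d2" by simp_all
  have e4: "1 + (f-1) - (2 * f - 2 - d1 - d2 - a1 + of_nat N) = 2 + a1 + d1 + d2 - f - of_nat N"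
    by (simp add: algebra_simps)
  have e5: "1 + (f-1) + of_nat N = f + of_nat N" by simp
  show ?thesis unfolding hyper_term_def tt_def e2 e1 e3 e4 e5 by (simp add: mult.assoc)
qed

lemma poch_isCont [continuous_intros]:
  fixes g :: "complex \<Rightarrow> complex"
  assumes "isCont g x"
  shows "isCont (\<lambda>s. pochhammer (g s) n) x"
  by (induct n) (auto simp: pochhammer_rec' intro!: continuous_intros assms)

lemma lin_ev:
  fixes al be :: complex
  assumes "be \<noteq> 0"
  shows "\<forall>\<^sub>F s in at 0. al + be* s \<notin> \<int>"
proof -
  define R where "R = norm al + norm be"
  define S where "S = {s. al + be* s \<in> \<int> \<and> norm s < 1}"
  have "S \<subseteq> (\<lambda>k. (of_int k - al)/be) ` {-\<lceil>R\<rceil>..\<lceil>R\<rceil>}"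
  proof
    fix s assume "s \<in> S"
    then have si: "al + be* s \<in> \<int>" and sn: "norm s < 1" unfolding S_def by auto
    from si obtain k where k: "al + be* s = of_int k" by (auto elim: Ints_cases)
    have "\<bar>real_of_int k\<bar> = norm (al + be* s)" using k by (metis norm_of_int)
    also have "\<dots> \<le> norm al + norm be * norm s" by (metis norm_triangle_ineq norm_mult)
    also have "\<dots> \<le> R" unfolding R_def using sn
      by (simp add: mult_left_le norm_ge_zero less_imp_le)
    finally have "\<bar>real_of_int k\<bar> \<le> R" .
    then have kR: "real_of_int k \<le> R" "- real_of_int k \<le> R" by (auto simp: abs_le_iff)
    have c: "R \<le> of_int \<lceil>R\<rceil>" by (rule le_of_int_ceiling)
    have "real_of_int k \<le> real_of_int \<lceil>R\<rceil>" using kR c by linarith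
    moreover have "real_of_int (-k) \<le> real_of_int \<lceil>R\<rceil>" using kR c by (simp only: of_int_minus)
    ultimately have "k \<le> \<lceil>R\<rceil>" "-k \<le> \<lceil>R\<rceil>" by (simp_all only: of_int_le_iff)
    then have "k \<in> {-\<lceil>R\<rceil>..\<lceil>R\<rceil>}" by simp
    moreover have "s = (of_int k - al)/be" using k assms by (simp add: field_simps)
    ultimately show "s \<in> (\<lambda>k. (of_int k - al)/be) ` {-\<lceil>R\<rceil>..\<lceil>R\<rceil>}" by blast
  qed
  then have fin: "finite S" by (rule finite_subset) simp
  then have "\<forall>\<^sub>F s in at 0. s \<notin> S" using islimpt_finite islimpt_iff_eventually by blast
  moreover have "\<forall>\<^sub>F s in at (0::complex). s \<in> ball 0 1 \<and> s \<in> UNIV"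
    using eventually_at_ball[of 1 "0::complex" UNIV] by simp
  ultimately show ?thesis
    by eventually_elim (auto simp: S_def)
qed

lemma cubic_ev:
  fixes g :: "complex \<Rightarrow> complex" and qa qb qc qd :: complex
  assumes "qd \<noteq> 0" "\<And>s. g s = qa + qb* s + qc* s^2 + qd* s^3"
  shows "\<forall>\<^sub>F s in at 0. g s \<noteq> 0"
proof -
  define p where "p = [:qa, qb, qc, qd:]"
  have "p \<noteq> 0" unfolding p_def using assms(1) by simp
  then have "finite {s. poly p s = 0}" by (rule poly_roots_finite)
  moreover have "{s. g s = 0} = {s. poly p s = 0}"
    unfolding p_def using assms(2) by (auto simp: algebra_simps power2_eq_square power3_eq_cube)
  ultimately have "finite {s. g s = 0}" by simp
  then have "\<forall>\<^sub>F s in at 0. s \<notin> {s. g s = 0}" using islimpt_finite islimpt_iff_eventually by blast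
  then show ?thesis by simp
qed


lemma lin_ev':
  fixes g :: "complex \<Rightarrow> complex" and al be :: complex
  assumes "be \<noteq> 0" "\<And>s. g s = al + be * s"
  shows "\<forall>\<^sub>F s in at 0. g s \<notin> \<int>"
  using lin_ev[OF assms(1), of al] assms(2) by simp

lemma poch_nonpos: "\<not> nonpos_int x \<Longrightarrow> pochhammer x n \<noteq> 0"
  unfolding nonpos_int_def by (auto simp: pochhammer_eq_0_iff)

lemma hsum:
  fixes f a1 d1 d2 :: complex and N :: nat
  shows "hypergeom
           [f - 1, (f + 1) / 2, a1, d1, d2, 2 * f - 2 - d1 - d2 - a1 + of_nat N, - of_nat N]
           [(f - 1) / 2, f - a1, f - d1, f - d2, 2 + a1 + d1 + d2 - f - of_nat N, f + of_nat N] 1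
       = (\<Sum>n\<le>N. tt (f-1) a1 d1 d2 N n)"
  unfolding hypergeom_def hyper_tt
  by (rule suminf_finite) (auto simp: tt_zero)

lemma gen_ev:
  fixes f a1 d1 d2 :: complex and N :: nat
  shows "\<forall>\<^sub>F s in at 0. Gen (f - 1 + 10* s) (a1 + s) (d1 + 2* s) (d2 + 4* s) N"
proof -
  have L: "\<forall>\<^sub>F s in at 0. (f - 1 + 10* s) \<notin> \<int> \<and> (a1 + s) \<notin> \<int> \<and> (d1 + 2* s) \<notin> \<int> \<and> (d2 + 4* s) \<notin> \<int>
     \<and> (f - 1 + 10* s) - (a1 + s) \<notin> \<int> \<and> (f - 1 + 10* s) - (d1 + 2* s) \<notin> \<int> \<and> (f - 1 + 10* s) - (d2 + 4* s) \<notin> \<int>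
     \<and> (f - 1 + 10* s) - (a1 + s) - (d1 + 2* s) \<notin> \<int> \<and> (f - 1 + 10* s) - (a1 + s) - (d2 + 4* s) \<notin> \<int>
     \<and> (f - 1 + 10* s) - (d1 + 2* s) - (d2 + 4* s) \<notin> \<int> \<and> (f - 1 + 10* s) - (a1 + s) - (d1 + 2* s) - (d2 + 4* s) \<notin> \<int>
     \<and> 2*(f - 1 + 10* s) - (a1 + s) - (d1 + 2* s) - (d2 + 4* s) \<notin> \<int>"
    apply (intro eventually_conj)
    apply (rule lin_ev'[of 10 _ "f-1"]; simp add: algebra_simps)
    apply (rule lin_ev'[of 1 _ "a1"]; simp add: algebra_simps)
    apply (rule lin_ev'[of 2 _ "d1"]; simp add: algebra_simps)
    apply (rule lin_ev'[of 4 _ "d2"]; simp add: algebra_simps)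
    apply (rule lin_ev'[of 9 _ "f-1-a1"]; simp add: algebra_simps)
    apply (rule lin_ev'[of 8 _ "f-1-d1"]; simp add: algebra_simps)
    apply (rule lin_ev'[of 6 _ "f-1-d2"]; simp add: algebra_simps)
    apply (rule lin_ev'[of 7 _ "f-1-a1-d1"]; simp add: algebra_simps)
    apply (rule lin_ev'[of 5 _ "f-1-a1-d2"]; simp add: algebra_simps)
    apply (rule lin_ev'[of 4 _ "f-1-d1-d2"]; simp add: algebra_simps)
    apply (rule lin_ev'[of 3 _ "f-1-a1-d1-d2"]; simp add: algebra_simps)
    apply (rule lin_ev'[of 13 _ "2*(f-1)-a1-d1-d2"]; simp add: algebra_simps)
    done
  have K: "\<forall>\<^sub>F s in at 0. \<forall>M\<in>{..N}. KF (f - 1 + 10* s) (a1 + s) (d1 + 2* s) (d2 + 4* s) (of_nat M) \<noteq> 0"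
  proof (rule eventually_ball_finite, simp, rule ballI)
    fix M assume "M \<in> {..N}"
    define a where "a = f - 1"
    define m where "m = (of_nat M :: complex)"
    show "\<forall>\<^sub>F s in at 0. KF (f - 1 + 10* s) (a1 + s) (d1 + 2* s) (d2 + 4* s) (of_nat M) \<noteq> 0"
    proof (rule cubic_ev[where qd = "-140"])
      fix s :: complex
      show "KF (f - 1 + 10* s) (a1 + s) (d1 + 2* s) (d2 + 4* s) (of_nat M) =
        KF a a1 d1 d2 m
        + (-16*a^2 + 20*a*a1 + 21*a*d1 + 23*a*d2 - 19*a*m - 4*a1^2 - 16*a1*d1 - 16*a1*d2 + 16*a1*m
           - 5*d1^2 - 16*d1*d2 + 16*d1*m - 7*d2^2 + 16*d2*m - 3*m^2) * s
        + (-83*a + 48*a1 + 55*d1 + 63*d2 - 39*m) * s^2 + (-140) * s^3"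
        unfolding KF_def a_def m_def by algebra
    qed simp
  qed
  show ?thesis using L K
    by eventually_elim (auto simp: Gen_def)
qed


lemma contL:
  fixes f a1 d1 d2 :: complex and N :: nat
  assumes nz: "\<And>n. pochhammer ((f - 1)/2) n \<noteq> 0" "\<And>n. pochhammer (f - a1) n \<noteq> 0"
     "\<And>n. pochhammer (f - d1) n \<noteq> 0" "\<And>n. pochhammer (f - d2) n \<noteq> 0"
     "\<And>n. pochhammer (2 + a1 + d1 + d2 - f - of_nat N) n \<noteq> 0" "\<And>n. pochhammer (f + of_nat N) n \<noteq> 0"
  shows "isCont (\<lambda>s. \<Sum>n\<le>N. tt (f - 1 + 10 * s) (a1 + s) (d1 + 2 * s) (d2 + 4 * s) N n) 0"
proof (rule isCont_sum, rule ballI)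
  fix n assume "n \<in> {..N}"
  have e: "1 + (f - 1) - a1 = f - a1" "1 + (f - 1) - d1 = f - d1" "1 + (f - 1) - d2 = f - d2"
    "1 + (f - 1) - (2 * (f - 1) - a1 - d1 - d2 + of_nat N) = 2 + a1 + d1 + d2 - f - of_nat N"
    "1 + (f - 1) + of_nat N = f + of_nat N"
    by (simp_all add: algebra_simps)
  show "isCont (\<lambda>s. tt (f - 1 + 10 * s) (a1 + s) (d1 + 2 * s) (d2 + 4 * s) N n) 0"
    unfolding tt_def
  proof (rule isCont_divide)
    show "isCont (\<lambda>s. pochhammer (f - 1 + 10 * s) n * pochhammer (1 + (f - 1 + 10 * s) / 2) n *
          pochhammer (a1 + s) n * pochhammer (d1 + 2 * s) n * pochhammer (d2 + 4 * s) n *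
          pochhammer (EF (f - 1 + 10 * s) (a1 + s) (d1 + 2 * s) (d2 + 4 * s) (of_nat N)) n *
          pochhammer (- of_nat N) n) 0"
      unfolding EF_def by (intro isCont_mult poch_isCont continuous_intros; simp)
    show "isCont (\<lambda>s. pochhammer ((f - 1 + 10 * s) / 2) n * pochhammer (1 + (f - 1 + 10 * s) - (a1 + s)) n *
          pochhammer (1 + (f - 1 + 10 * s) - (d1 + 2 * s)) n * pochhammer (1 + (f - 1 + 10 * s) - (d2 + 4 * s)) n *
          pochhammer (1 + (f - 1 + 10 * s) - EF (f - 1 + 10 * s) (a1 + s) (d1 + 2 * s) (d2 + 4 * s) (of_nat N)) n *
          pochhammer (1 + (f - 1 + 10 * s) + of_nat N) n * fact n) 0"
      unfolding EF_def by (intro isCont_mult poch_isCont continuous_intros; simp)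
    show "pochhammer ((f - 1 + 10 * 0) / 2) n * pochhammer (1 + (f - 1 + 10 * 0) - (a1 + 0)) n *
          pochhammer (1 + (f - 1 + 10 * 0) - (d1 + 2 * 0)) n * pochhammer (1 + (f - 1 + 10 * 0) - (d2 + 4 * 0)) n *
          pochhammer (1 + (f - 1 + 10 * 0) - EF (f - 1 + 10 * 0) (a1 + 0) (d1 + 2 * 0) (d2 + 4 * 0) (of_nat N)) n *
          pochhammer (1 + (f - 1 + 10 * 0) + of_nat N) n * fact n \<noteq> (0::complex)"
      unfolding EF_def mult_zero_right add_0_right e
      by (simp only: mult_eq_0_iff nz fact_nonzero simp_thms)
  qed
qed


lemma contR:
  fixes f a1 d1 d2 :: complex and N :: nat
  assumes nz: "pochhammer (1 + (f - 1) - d1) N \<noteq> 0" "pochhammer (1 + (f - 1) - d2) N \<noteq> 0"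
     "pochhammer (1 + (f - 1) - a1) N \<noteq> 0" "pochhammer (f - 1 - a1 - d1 - d2) N \<noteq> 0"
     "hF (f - 1) a1 d1 d2 (of_nat N) * ((a1 + d1 - (f - 1)) * (a1 + d2 - (f - 1))) \<noteq> 0"
  shows "isCont (\<lambda>s. RHSF (f - 1 + 10 * s) (a1 + s) (d1 + 2 * s) (d2 + 4 * s) N) 0"
  unfolding RHSF_def PiF_def
  apply (rule isCont_divide)
    apply (rule isCont_mult)
     apply (rule isCont_divide)
       apply (intro isCont_mult poch_isCont continuous_intros; simp)
      apply (intro isCont_mult poch_isCont continuous_intros; simp)
     apply (unfold mult_zero_right add_0_right)
     apply (simp only: mult_eq_0_iff nz simp_thms)
    apply (unfold KF_def)
    apply (intro continuous_intros)
   apply (unfold hF_def)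
   apply (intro continuous_intros)
  using nz(5) unfolding hF_def by assumption


theorem mainTheorem13:
  fixes N :: nat and f a1 d1 d2 h k :: complex
  assumes lower_ok: "\<forall>b \<in> set [(f - 1) / 2, f - a1, f - d1, f - d2,
                         2 + a1 + d1 + d2 - f - of_nat N, f + of_nat N]. \<not> nonpos_int b"
    and h_def: "h = 1 - f + d1 + d2 - of_nat N"
    and den: "d1 * d2 - h * (1 + d1 + d2 + a1 - f) \<noteq> 0"
    and k_def: "k = h * (1 + d1 + a1 - f) * (1 + d2 + a1 - f) / (d1 * d2 - h * (1 + d1 + d2 + a1 - f))"
    and kN: "pochhammer k N \<noteq> 0"
  shows "hypergeom
           [f - 1, (f + 1) / 2, a1, d1, d2, 2 * f - 2 - d1 - d2 - a1 + of_nat N, - of_nat N]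
           [(f - 1) / 2, f - a1, f - d1, f - d2, 2 + a1 + d1 + d2 - f - of_nat N, f + of_nat N] 1
       = (pochhammer f N * pochhammer (f - d1 - d2) N * pochhammer (f - a1 - d1 - 1) N
            * pochhammer (f - a1 - d2 - 1) N)
         / (pochhammer (f - d1) N * pochhammer (f - d2) N * pochhammer (f - a1) N
            * pochhammer (f - a1 - d1 - d2 - 1) N)
         * (pochhammer (k + 1) N / pochhammer k N)"
proof -
  note hs = hsum[of f a1 d1 d2 N]
  show ?thesis
  proof (cases "N = 0")
    case True
    then show ?thesis unfolding hs by (simp add: tt_def)
  next
    case False
    have l1: "\<not> nonpos_int ((f - 1) / 2)" and l2: "\<not> nonpos_int (f - a1)" and l3: "\<not> nonpos_int (f - d1)"
      and l4: "\<not> nonpos_int (f - d2)" and l5: "\<not> nonpos_int (2 + a1 + d1 + d2 - f - of_nat N)"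
      and l6: "\<not> nonpos_int (f + of_nat N)"
      using lower_ok by auto
    have knz: "k \<noteq> 0"
    proof
      assume "k = 0"
      then have "pochhammer k N = 0" using False by (cases N) (auto simp: pochhammer_rec)
      then show False using kN by simp
    qed
    define B1 where "B1 = 1 + d1 + a1 - f"
    define B2 where "B2 = 1 + d2 + a1 - f"
    define dn where "dn = d1 * d2 - h * (1 + d1 + d2 + a1 - f)"
    have hB: "h * B1 * B2 \<noteq> 0" using knz k_def unfolding B1_def B2_def by auto
    define Lf where "Lf s = (\<Sum>n\<le>N. tt (f - 1 + 10 * s) (a1 + s) (d1 + 2 * s) (d2 + 4 * s) N n)" for s
    define Rf where "Rf s = RHSF (f - 1 + 10 * s) (a1 + s) (d1 + 2 * s) (d2 + 4 * s) N" for s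
    have ev: "\<forall>\<^sub>F s in at 0. Lf s = Rf s"
      using gen_ev[of f a1 d1 d2 N] by eventually_elim (simp add: Lf_def Rf_def main_gen)
    have cL: "isCont Lf 0" unfolding Lf_def
    proof (rule contL)
      show "\<And>n. pochhammer ((f - 1)/2) n \<noteq> 0" by (rule poch_nonpos[OF l1])
      show "\<And>n. pochhammer (f - a1) n \<noteq> 0" by (rule poch_nonpos[OF l2])
      show "\<And>n. pochhammer (f - d1) n \<noteq> 0" by (rule poch_nonpos[OF l3])
      show "\<And>n. pochhammer (f - d2) n \<noteq> 0" by (rule poch_nonpos[OF l4])
      show "\<And>n. pochhammer (2 + a1 + d1 + d2 - f - of_nat N) n \<noteq> 0" by (rule poch_nonpos[OF l5])
      show "\<And>n. pochhammer (f + of_nat N) n \<noteq> 0" by (rule poch_nonpos[OF l6])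
    qed
    have cR: "isCont Rf 0" unfolding Rf_def
    proof (rule contR)
      show "pochhammer (1 + (f - 1) - d1) N \<noteq> 0" using poch_nonpos[OF l3] by simp
      show "pochhammer (1 + (f - 1) - d2) N \<noteq> 0" using poch_nonpos[OF l4] by simp
      show "pochhammer (1 + (f - 1) - a1) N \<noteq> 0" using poch_nonpos[OF l2] by simp
      show "pochhammer (f - 1 - a1 - d1 - d2) N \<noteq> 0"
      proof
        assume "pochhammer (f - 1 - a1 - d1 - d2) N = 0"
        then obtain j where j: "j < N" "f - 1 - a1 - d1 - d2 = - of_nat j"
          by (auto simp: pochhammer_eq_0_iff)
        have "2 + a1 + d1 + d2 - f - of_nat N = - of_nat (N - 1 - j)"
          using j by (simp add: of_nat_diff algebra_simps)
        then show False using l5 unfolding nonpos_int_def by blast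
      qed
      show "hF (f - 1) a1 d1 d2 (of_nat N) * ((a1 + d1 - (f - 1)) * (a1 + d2 - (f - 1))) \<noteq> 0"
        using hB unfolding hF_def B1_def B2_def h_def by (simp add: algebra_simps)
    qed
    have LR: "Lf 0 = Rf 0"
    proof -
      have t1: "(Lf \<longlongrightarrow> Rf 0) (at 0)"
        using Lim_transform_eventually[OF isContD[OF cR]] ev
        by (simp add: eq_commute)
      show ?thesis using tendsto_unique[OF at_neq_bot isContD[OF cL] t1] .
    qed
    have L0: "Lf 0 = (\<Sum>n\<le>N. tt (f-1) a1 d1 d2 N n)" unfolding Lf_def by simp
    have R0: "Rf 0 = RHSF (f-1) a1 d1 d2 N" unfolding Rf_def by simp
    have Pi: "PiF (f-1) a1 d1 d2 N = (pochhammer f N * pochhammer (f - d1 - d2) N * pochhammer (f - a1 - d1 - 1) N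
            * pochhammer (f - a1 - d2 - 1) N)
         / (pochhammer (f - d1) N * pochhammer (f - d2) N * pochhammer (f - a1) N
            * pochhammer (f - a1 - d1 - d2 - 1) N)"
    proof -
      have e: "1 + (f - 1) = f" "1 + (f - 1) - d1 - d2 = f - d1 - d2" "f - 1 - a1 - d1 = f - a1 - d1 - 1"
        "f - 1 - a1 - d2 = f - a1 - d2 - 1" "1 + (f - 1) - d1 = f - d1" "1 + (f - 1) - d2 = f - d2"
        "1 + (f - 1) - a1 = f - a1"
        by (simp_all add: algebra_simps)
      have e8: "f - 1 - a1 - d1 - d2 = f - a1 - d1 - d2 - 1" by (simp add: algebra_simps)
      show ?thesis unfolding PiF_def e8 unfolding e ..
    qed
    have kr: "pochhammer (k + 1) N / pochhammer k N = (k + of_nat N) / k"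
    proof -
      have "k * pochhammer (k + 1) N = pochhammer k N * (k + of_nat N)" by (rule poch_shift)
      then show ?thesis using knz kN by (simp add: field_simps)
    qed
    have dnz: "dn \<noteq> 0" using den unfolding dn_def .
    have KR: "KF (f-1) a1 d1 d2 (of_nat N) / (hF (f-1) a1 d1 d2 (of_nat N) * ((a1 + d1 - (f - 1)) * (a1 + d2 - (f - 1))))
        = (k + of_nat N) / k"
    proof -
      have hF: "hF (f-1) a1 d1 d2 (of_nat N) = h" unfolding hF_def h_def by (simp add: algebra_simps)
      have BB: "(a1 + d1 - (f - 1)) * (a1 + d2 - (f - 1)) = B1 * B2" unfolding B1_def B2_def by (simp add: algebra_simps)
      have KK: "KF (f-1) a1 d1 d2 (of_nat N) = h * B1 * B2 + of_nat N * dn"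
        unfolding KF_def dn_def B1_def B2_def h_def by (simp add: algebra_simps)
      have kk: "k = h * B1 * B2 / dn" unfolding k_def B1_def B2_def dn_def ..
      show ?thesis unfolding hF BB KK kk using dnz hB by (simp add: field_simps)
    qed
    have "hypergeom
           [f - 1, (f + 1) / 2, a1, d1, d2, 2 * f - 2 - d1 - d2 - a1 + of_nat N, - of_nat N]
           [(f - 1) / 2, f - a1, f - d1, f - d2, 2 + a1 + d1 + d2 - f - of_nat N, f + of_nat N] 1
        = RHSF (f-1) a1 d1 d2 N" unfolding hs using LR L0 R0 by simp
    also have "\<dots> = PiF (f-1) a1 d1 d2 N * (KF (f-1) a1 d1 d2 (of_nat N) / (hF (f-1) a1 d1 d2 (of_nat N) * ((a1 + d1 - (f - 1)) * (a1 + d2 - (f - 1)))))"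
      unfolding RHSF_def by simp
    also have "\<dots> = (pochhammer f N * pochhammer (f - d1 - d2) N * pochhammer (f - a1 - d1 - 1) N
            * pochhammer (f - a1 - d2 - 1) N)
         / (pochhammer (f - d1) N * pochhammer (f - d2) N * pochhammer (f - a1) N
            * pochhammer (f - a1 - d1 - d2 - 1) N)
         * (pochhammer (k + 1) N / pochhammer k N)" unfolding Pi KR kr ..
    finally show ?thesis .
  qed
qed


end
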